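(* Let $n\ge3$ and $k$ be an integer with $1\le k<\lfloor n/2\rfloor$. Then there is a bijection between $\mathcal D_{k,n}$ and the set $\mathcal A_{k+1}$ of non-interval permutations of length $k+1$; in particular $|\mathcal D_{k,n}|=|\mathcal A_{k+1}|$. (Explicitly, with $\mathcal B_{k+1}=\{\tilde b: b\in\mathcal A_{k+1}\}$, the map $u\mapsto{\rm red}(u\,a)$ with $a=\min([n]\setminus{\rm alph}(u))$ is a bijection $\mathcal D_{k,n}\to\mathcal B_{k+1}$.)
   Context: $[m,n]=\{m,\ldots,n\}$, $[n]=[1,n]$; ${\rm alph}(w)$ is the set of letters of $w$; $\tilde w$ is the reversal of a word $w$. For a word $\tau$ of distinct positive integers, ${\rm red}(\tau)$ replaces the smallest letter by $1$, the second smallest by $2$, etc. A finite set $A\subset\mathbb P$ with $|A|\ge2$ is periodic if the differences between consecutive elements (in increasing order) are all equal. For $n\ge3$, $k\in[n-2]$, $\mathcal D_{k,n}$ is the set of words $u=u_1\cdots u_k$ of $k$ distinct letters of $[n]$ such that $[n]\setminus\{u_1,\ldots,u_k\}$ is periodic and for every $j<k$ the set $[n]\setminus\{u_1,\ldots,u_j\}$ is not periodic. A permutation $s=s_1\cdots s_N$ of $[N]$, $N\ge2$, is non-interval if for every $l$ with $2\le l<N$ the set $\{s_1,\ldots,s_l\}$ is not of the form $[c,c+l-1]$ for any integer $c$. *)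

theory Defs
  imports Main
begin

definition periodic :: "nat set \<Rightarrow> bool" where
  "periodic A \<longleftrightarrow> finite A \<and> card A \<ge> 2 \<and>
     (let xs = sorted_list_of_set A in
       \<forall>i j. Suc i < length xs \<and> Suc j < length xs \<longrightarrow>
         xs ! Suc i - xs ! i = xs ! Suc j - xs ! j)"

definition Dset :: "nat \<Rightarrow> nat \<Rightarrow> nat list set" where
  "Dset k n = {u. length u = k \<and> distinct u \<and> set u \<subseteq> {1..n} \<and>
      periodic ({1..n} - set u) \<and>
      (\<forall>j. 1 \<le> j \<and> j < k \<longrightarrow> \<not> periodic ({1..n} - set (take j u)))}"

definition red :: "nat list \<Rightarrow> nat list" where
  "red w = map (\<lambda>x. card {y \<in> set w. y \<le> x}) w"

definition non_interval :: "nat list \<Rightarrow> bool" where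
  "non_interval s \<longleftrightarrow> length s \<ge> 2 \<and> distinct s \<and> set s = {1..length s} \<and>
     (\<forall>l. 2 \<le> l \<and> l < length s \<longrightarrow>
        \<not> (\<exists>c::int. int ` set (take l s) = {c..c + int l - 1}))"

definition Aset :: "nat \<Rightarrow> nat list set" where
  "Aset N = {s. length s = N \<and> non_interval s}"

definition Bset :: "nat \<Rightarrow> nat list set" where
  "Bset N = rev ` Aset N"

definition amin :: "nat \<Rightarrow> nat list \<Rightarrow> nat" where
  "amin n u = Min ({1..n} - set u)"

end

theory Submission
  imports Defs
begin

definition cvx :: "nat set \<Rightarrow> bool" where
  "cvx X \<longleftrightarrow> (\<forall>x\<in>X. \<forall>y\<in>X. \<forall>z. x \<le> z \<and> z \<le> y \<longrightarrow> z \<in> X)"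

lemma cvx_interval: "cvx {p..q}"
  unfolding cvx_def by auto

lemma cvx_iff_interval:
  assumes "finite X" "X \<noteq> {}"
  shows "cvx X \<longleftrightarrow> X = {Min X..Max X}"
proof
  assume "cvx X"
  show "X = {Min X..Max X}"
  proof (rule equalityI)
    show "X \<subseteq> {Min X..Max X}"
    proof
      fix x assume "x \<in> X"
      then have "Min X \<le> x" "x \<le> Max X" using assms by simp_all
      then show "x \<in> {Min X..Max X}" by simp
    qed
    show "{Min X..Max X} \<subseteq> X"
    proof
      fix z assume "z \<in> {Min X..Max X}"
      then have z: "Min X \<le> z" "z \<le> Max X" by simp_all
      have "Min X \<in> X" "Max X \<in> X" using assms by simp_all
      then show "z \<in> X" using \<open>cvx X\<close> z unfolding cvx_def by blast
    qed
  qed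
next
  assume H: "X = {Min X..Max X}"
  show "cvx X" by (subst H) (rule cvx_interval)
qed

lemma int_interval_iff:
  assumes "finite X" "X \<noteq> {}"
  shows "(\<exists>c::int. int ` X = {c..c + int (card X) - 1}) \<longleftrightarrow> cvx X"
proof
  assume "\<exists>c::int. int ` X = {c..c + int (card X) - 1}"
  then obtain c::int where c: "int ` X = {c..c + int (card X) - 1}" by blast
  show "cvx X" unfolding cvx_def
  proof (intro ballI allI impI)
    fix x y z assume xy: "x \<in> X" "y \<in> X" "x \<le> z \<and> z \<le> y"
    have "int x \<in> {c..c + int (card X) - 1}" "int y \<in> {c..c + int (card X) - 1}"
      using c xy by auto
    then have "int z \<in> int ` X" using c xy by auto
    then show "z \<in> X" by auto
  qed
next
  assume "cvx X"
  then have X0: "X = {Min X..Max X}" using cvx_iff_interval assms by blast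
  define p where "p = Min X"
  define q where "q = Max X"
  have X: "X = {p..q}" using X0 unfolding p_def q_def .
  have le: "p \<le> q" unfolding p_def q_def using assms by simp
  have "int ` X = {int p..int p + int (card X) - 1}"
    using le unfolding X by (simp add: image_int_atLeastAtMost of_nat_diff)
  then show "\<exists>c::int. int ` X = {c..c + int (card X) - 1}" by blast
qed


lemma periodic_imp_cvx:
  assumes fin: "finite A" and sub: "A \<subseteq> {1..n}" and big: "n + 2 \<le> 2 * card A"
    and per: "periodic A"
  shows "cvx A"
proof -
  define xs where "xs = sorted_list_of_set A"
  define m where "m = length xs"
  have m: "m = card A" unfolding m_def xs_def by simp
  have setxs: "set xs = A" unfolding xs_def using fin by simp
  have strict: "sorted_wrt (<) xs" unfolding xs_def by simp
  have m2: "m \<ge> 2" using per m unfolding periodic_def by simp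
  define d where "d = xs ! 1 - xs ! 0"
  have P: "\<forall>i j. Suc i < m \<and> Suc j < m \<longrightarrow> xs ! Suc i - xs ! i = xs ! Suc j - xs ! j"
    using per unfolding periodic_def Let_def xs_def m_def by blast
  have step: "xs ! Suc i - xs ! i = d" if "Suc i < m" for i
    using P[rule_format, of i 0] that m2 by (simp add: d_def)
  have lt: "xs ! i < xs ! Suc i" if "Suc i < m" for i
    using sorted_wrt_nth_less[OF strict, of i "Suc i"] that m_def by simp
  have d1: "d \<ge> 1" using lt[of 0] m2 d_def by simp
  have form: "xs ! i = xs ! 0 + i * d" if "i < m" for i
    using that
  proof (induction i)
    case 0 then show ?case by simp
  next
    case (Suc i)
    then have "xs ! Suc i = xs ! i + d" using step[of i] lt[of i] by simp
    then show ?case using Suc by simp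
  qed
  have "xs ! (m - 1) \<in> A" using setxs m2 m_def nth_mem[of "m - 1" xs] by simp
  have "xs \<noteq> []" using m2 m_def by auto
  then have "xs ! 0 \<in> A" using setxs nth_mem[of 0 xs] by auto
  note \<open>xs ! (m - 1) \<in> A\<close> \<open>xs ! 0 \<in> A\<close>
  then have "xs ! (m - 1) \<le> n" "xs ! 0 \<ge> 1" using sub by auto
  then have "xs ! 0 + (m - 1) * d \<le> n" "xs ! 0 \<ge> 1" using form[of "m - 1"] m2 by auto
  then have bound: "1 + (m - 1) * d \<le> n" by linarith
  have "d = 1"
  proof (rule ccontr)
    assume "d \<noteq> 1"
    then have "d \<ge> 2" using d1 by simp
    then have "(m - 1) * 2 \<le> (m - 1) * d" by simp
    then have "1 + (m - 1) * 2 \<le> n" using bound by (meson add_le_mono le_trans order_refl)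
    moreover obtain m' where "m = Suc m'" using m2 by (cases m) auto
    ultimately show False using big m by simp
  qed
  then have form1: "xs ! i = xs ! 0 + i" if "i < m" for i using form[OF that] by simp
  show "cvx A" unfolding cvx_def
  proof (intro ballI allI impI)
    fix x y z assume x: "x \<in> A" and y: "y \<in> A" and z: "x \<le> z \<and> z \<le> y"
    have "x \<in> set xs" using x setxs by simp
    then obtain i where i0: "i < length xs" "xs ! i = x" by (auto simp: in_set_conv_nth)
    have "y \<in> set xs" using y setxs by simp
    then obtain i' where i0': "i' < length xs" "xs ! i' = y" by (auto simp: in_set_conv_nth)
    have i: "i < m" "x = xs ! i" using i0 m_def by auto
    have i': "i' < m" "y = xs ! i'" using i0' m_def by auto
    have "z - xs ! 0 < m" using form1[OF i'(1)] i' z by linarith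
    moreover have "z = xs ! 0 + (z - xs ! 0)" using form1[OF i(1)] i z by linarith
    moreover have "xs ! (z - xs ! 0) = xs ! 0 + (z - xs ! 0)" using form1[OF \<open>z - xs ! 0 < m\<close>] .
    ultimately have zz: "z = xs ! (z - xs ! 0)" by linarith
    have "xs ! (z - xs ! 0) \<in> set xs" using \<open>z - xs ! 0 < m\<close> m_def by simp
    then have "xs ! (z - xs ! 0) \<in> A" using setxs by simp
    then show "z \<in> A" by (subst zz)
  qed
qed

lemma cvx_imp_periodic:
  assumes fin: "finite A" and c2: "card A \<ge> 2" and cv: "cvx A"
  shows "periodic A"
proof -
  have ne: "A \<noteq> {}" using c2 by auto
  have e1: "A = {Min A..Max A}" using cvx_iff_interval[OF fin ne] cv by blast
  define p where "p = Min A"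
  define q where "q = Suc (Max A)"
  have eq: "A = {p..<q}" unfolding p_def q_def by (metis e1 atLeastLessThanSuc_atLeastAtMost)
  have xs: "sorted_list_of_set A = [p..<q]" by (simp only: eq sorted_list_of_set_range)
  have "\<forall>i j. Suc i < length [p..<q] \<and> Suc j < length [p..<q] \<longrightarrow>
    [p..<q] ! Suc i - [p..<q] ! i = [p..<q] ! Suc j - [p..<q] ! j"
  proof (intro allI impI)
    fix i j assume ij: "Suc i < length [p..<q] \<and> Suc j < length [p..<q]"
    then have h: "p + Suc i < q" "p + i < q" "p + Suc j < q" "p + j < q" by auto
    have "[p..<q] ! Suc i = p + Suc i" "[p..<q] ! i = p + i"
      "[p..<q] ! Suc j = p + Suc j" "[p..<q] ! j = p + j"
      using nth_upt[OF h(1)] nth_upt[OF h(2)] nth_upt[OF h(3)] nth_upt[OF h(4)] by simp_all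
    then show "[p..<q] ! Suc i - [p..<q] ! i = [p..<q] ! Suc j - [p..<q] ! j" by simp
  qed
  then show ?thesis unfolding periodic_def Let_def xs using fin c2 by blast
qed

lemma periodic_iff_cvx:
  assumes "finite A" "A \<subseteq> {1..n}" "card A \<ge> 2" "n + 2 \<le> 2 * card A"
  shows "periodic A \<longleftrightarrow> cvx A"
  using periodic_imp_cvx cvx_imp_periodic assms by blast


definition gg :: "nat \<Rightarrow> nat \<Rightarrow> nat \<Rightarrow> nat" where
  "gg a c x = (if x \<le> a then x else if x \<le> a + c then a else x - c)"

lemma gg_mono: "x \<le> y \<Longrightarrow> gg a c x \<le> gg a c y"
  unfolding gg_def by auto

lemma cvx_gg:
  assumes sub: "{a..a+c} \<subseteq> T"
  shows "cvx T \<longleftrightarrow> cvx (gg a c ` T)"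
proof
  have aT: "a \<in> T" using sub by auto
  assume cv: "cvx T"
  show "cvx (gg a c ` T)" unfolding cvx_def
  proof (intro ballI allI impI)
    fix x' y' z assume x': "x' \<in> gg a c ` T" and y': "y' \<in> gg a c ` T" and z: "x' \<le> z \<and> z \<le> y'"
    obtain x where x: "x \<in> T" "x' = gg a c x" using x' by blast
    obtain y where y: "y \<in> T" "y' = gg a c y" using y' by blast
    show "z \<in> gg a c ` T"
    proof (cases "z \<le> a")
      case True
      have "z \<in> T"
      proof (cases "x \<le> a")
        case True
        then have "x \<le> z" using x z by (simp add: gg_def)
        then show ?thesis using cv x aT \<open>z \<le> a\<close> unfolding cvx_def by blast
      next
        case False
        then have "gg a c x \<ge> a" unfolding gg_def by auto
        then have "z = a" using x z \<open>z \<le> a\<close> by simp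
        then show ?thesis using aT by simp
      qed
      moreover have "gg a c z = z" using True by (simp add: gg_def)
      ultimately show ?thesis by (metis image_eqI)
    next
      case False
      then have "y > a + c" using y z unfolding gg_def by (auto split: if_splits)
      then have "y - c \<ge> z" using y z unfolding gg_def by auto
      then have zc: "a \<le> z + c" "z + c \<le> y" using False \<open>y > a + c\<close> by linarith+
      then have "z + c \<in> T" using cv y(1) aT unfolding cvx_def by blast
      moreover have "gg a c (z + c) = z" using False by (simp add: gg_def)
      ultimately show ?thesis by (metis image_eqI)
    qed
  qed
next
  assume cv: "cvx (gg a c ` T)"
  show "cvx T" unfolding cvx_def
  proof (intro ballI allI impI)
    fix x y z assume x: "x \<in> T" and y: "y \<in> T" and z: "x \<le> z \<and> z \<le> y"
    have zin: "gg a c z \<in> gg a c ` T"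
      using cv x y z gg_mono[of x z a c] gg_mono[of z y a c] unfolding cvx_def by blast
    then obtain t where t: "t \<in> T" "gg a c t = gg a c z" by auto
    show "z \<in> T"
    proof (cases "z < a")
      case True
      then have "t = z" using t unfolding gg_def by (auto split: if_splits)
      then show ?thesis using t by simp
    next
      case False
      show ?thesis
      proof (cases "z \<le> a + c")
        case True then show ?thesis using False sub by auto
      next
        case False
        then have "t = z" using t \<open>\<not> z < a\<close> unfolding gg_def by (auto split: if_splits)
        then show ?thesis using t by simp
      qed
    qed
  qed
qed


definition PD :: "nat \<Rightarrow> nat \<Rightarrow> nat list \<Rightarrow> bool" where
  "PD k n u \<longleftrightarrow> (\<forall>j. 1 \<le> j \<and> j < k \<longrightarrow> \<not> cvx ({1..n} - set (take j u)))"

definition PB :: "nat \<Rightarrow> nat list \<Rightarrow> bool" where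
  "PB k s \<longleftrightarrow> (\<forall>j. 1 \<le> j \<and> j < k \<longrightarrow> \<not> cvx (set (drop j s)))"

lemma card_compl_take:
  assumes "distinct u" "set u \<subseteq> {1..n}" "j \<le> length u"
  shows "card ({1..n} - set (take j u)) = n - j"
proof -
  have "set (take j u) \<subseteq> {1..n}" using assms by (meson set_take_subset subset_trans)
  moreover have "card (set (take j u)) = j" using assms by (simp add: distinct_card)
  ultimately show ?thesis by (simp add: card_Diff_subset)
qed

lemma periodic_compl_take:
  assumes "distinct u" "set u \<subseteq> {1..n}" "j \<le> length u" "2 * j + 2 \<le> n"
  shows "periodic ({1..n} - set (take j u)) \<longleftrightarrow> cvx ({1..n} - set (take j u))"
  apply (rule periodic_iff_cvx)
  using card_compl_take[OF assms(1-3)] assms(4) by auto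

lemma D_char:
  assumes n3: "n \<ge> 3" and k1: "1 \<le> k" and kn: "k < n div 2"
  shows "u \<in> Dset k n \<longleftrightarrow> (\<exists>a. 1 \<le> a \<and> a \<le> k + 1 \<and> length u = k \<and> distinct u \<and>
      set u = {1..<a} \<union> {a + (n - k - 1)<..n} \<and> PD k n u)"
proof -
  have kk: "2 * k + 2 \<le> n" using kn by linarith
  show ?thesis
  proof
    assume u: "u \<in> Dset k n"
    then have len: "length u = k" and dist: "distinct u" and sub: "set u \<subseteq> {1..n}"
      and per: "periodic ({1..n} - set u)"
      and np: "\<forall>j. 1 \<le> j \<and> j < k \<longrightarrow> \<not> periodic ({1..n} - set (take j u))"
      unfolding Dset_def by auto
    define R where "R = {1..n} - set u"
    have cv: "cvx R" using periodic_compl_take[OF dist sub, of k] len kk per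
      unfolding R_def by simp
    have cR: "card R = n - k" using card_compl_take[OF dist sub, of k] len unfolding R_def by simp
    have finR: "finite R" unfolding R_def by simp
    have neR: "R \<noteq> {}" using cR kk by auto
    have Req0: "R = {Min R..Max R}" using cvx_iff_interval[OF finR neR] cv by blast
    define a where "a = Min R"
    define bb where "bb = Max R"
    have Req: "R = {a..bb}" using Req0 unfolding a_def bb_def .
    have "card {a..bb} = n - k" using Req cR by metis
    then have b: "bb = a + (n - k - 1)" using kk by simp
    have Rab: "R = {a..a + (n - k - 1)}" using Req b by simp
    have "a \<in> R" "a + (n - k - 1) \<in> R" using Rab by auto
    then have a1: "1 \<le> a" and an: "a + (n - k - 1) \<le> n" unfolding R_def by auto
    have setu: "set u = {1..<a} \<union> {a + (n - k - 1)<..n}"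
    proof -
      have "set u = {1..n} - R" using sub unfolding R_def by auto
      also have "\<dots> = {1..<a} \<union> {a + (n - k - 1)<..n}" using Rab a1 an by auto
      finally show ?thesis .
    qed
    have "PD k n u" unfolding PD_def
    proof (intro allI impI)
      fix j assume j: "1 \<le> j \<and> j < k"
      then show "\<not> cvx ({1..n} - set (take j u))"
        using np periodic_compl_take[OF dist sub, of j] len kk by auto
    qed
    then show "\<exists>a. 1 \<le> a \<and> a \<le> k + 1 \<and> length u = k \<and> distinct u \<and>
      set u = {1..<a} \<union> {a + (n - k - 1)<..n} \<and> PD k n u"
      using a1 an len dist setu kk by (intro exI[of _ a]) auto
  next
    assume "\<exists>a. 1 \<le> a \<and> a \<le> k + 1 \<and> length u = k \<and> distinct u \<and>
      set u = {1..<a} \<union> {a + (n - k - 1)<..n} \<and> PD k n u"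
    then obtain a where a1: "1 \<le> a" and ak: "a \<le> k + 1" and len: "length u = k"
      and dist: "distinct u" and setu: "set u = {1..<a} \<union> {a + (n - k - 1)<..n}"
      and pd: "PD k n u" by blast
    have sub: "set u \<subseteq> {1..n}" using setu a1 ak kk by auto
    have "{1..n} - set u = {a..a + (n - k - 1)}" using setu a1 ak kk by auto
    then have "cvx ({1..n} - set u)" by (simp add: cvx_interval)
    then have per: "periodic ({1..n} - set u)"
      using periodic_compl_take[OF dist sub, of k] len kk by simp
    have np: "\<forall>j. 1 \<le> j \<and> j < k \<longrightarrow> \<not> periodic ({1..n} - set (take j u))"
      using pd periodic_compl_take[OF dist sub] len kk unfolding PD_def by auto
    show "u \<in> Dset k n" unfolding Dset_def using len dist sub per np by auto
  qed
qed

lemma amin_eq: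
  assumes "1 \<le> a" "a + c \<le> n" "set u = {1..<a} \<union> {a + c<..n}"
  shows "amin n u = a"
proof -
  have "{1..n} - set u = {a..a + c}" using assms by auto
  moreover have "Min {a..a + c} = a" by (rule Min_eqI) auto
  ultimately show ?thesis unfolding amin_def by simp
qed


lemma Bset_iff: "s \<in> Bset N \<longleftrightarrow> rev s \<in> Aset N"
  unfolding Bset_def by (metis image_eqI rev_rev_ident imageE)

lemma take_rev_interval:
  assumes len: "length s = k + 1" and dist: "distinct s" and l: "2 \<le> l" "l < k + 1"
  shows "(\<exists>c::int. int ` set (take l (rev s)) = {c..c + int l - 1})
     \<longleftrightarrow> cvx (set (drop (k + 1 - l) s))"
proof -
  have st: "set (take l (rev s)) = set (drop (k + 1 - l) s)"
    using len by (simp add: take_rev)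
  have cd: "card (set (drop (k + 1 - l) s)) = l"
    using dist len l by (simp add: distinct_card)
  have ne: "set (drop (k + 1 - l) s) \<noteq> {}" using cd l by auto
  show ?thesis using int_interval_iff[OF _ ne] st cd by simp
qed

lemma B_char:
  assumes k1: "1 \<le> k"
  shows "s \<in> Bset (k + 1) \<longleftrightarrow> length s = k + 1 \<and> distinct s \<and> set s = {1..k + 1} \<and> PB k s"
proof -
  have A: "s \<in> Bset (k + 1) \<longleftrightarrow> length s = k + 1 \<and> distinct s \<and> set s = {1..k + 1} \<and>
     (\<forall>l. 2 \<le> l \<and> l < k + 1 \<longrightarrow>
        \<not> (\<exists>c::int. int ` set (take l (rev s)) = {c..c + int l - 1}))"
    unfolding Bset_iff Aset_def non_interval_def using k1 by auto
  have B: "length s = k + 1 \<Longrightarrow> distinct s \<Longrightarrow>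
    (\<forall>l. 2 \<le> l \<and> l < k + 1 \<longrightarrow>
        \<not> (\<exists>c::int. int ` set (take l (rev s)) = {c..c + int l - 1})) \<longleftrightarrow> PB k s"
  proof -
    assume len: "length s = k + 1" and dist: "distinct s"
    have "(\<forall>l. 2 \<le> l \<and> l < k + 1 \<longrightarrow>
        \<not> (\<exists>c::int. int ` set (take l (rev s)) = {c..c + int l - 1}))
      \<longleftrightarrow> (\<forall>l. 2 \<le> l \<and> l < k + 1 \<longrightarrow> \<not> cvx (set (drop (k + 1 - l) s)))"
      using take_rev_interval[OF len dist] by blast
    also have "\<dots> \<longleftrightarrow> PB k s" unfolding PB_def
    proof
      assume H: "\<forall>l. 2 \<le> l \<and> l < k + 1 \<longrightarrow> \<not> cvx (set (drop (k + 1 - l) s))"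
      show "\<forall>j. 1 \<le> j \<and> j < k \<longrightarrow> \<not> cvx (set (drop j s))"
      proof (intro allI impI)
        fix j assume j: "1 \<le> j \<and> j < k"
        then have eq: "k + 1 - (k + 1 - j) = j" by simp
        have l: "2 \<le> k + 1 - j \<and> k + 1 - j < k + 1" using j by auto
        have "\<not> cvx (set (drop (k + 1 - (k + 1 - j)) s))" using H l by blast
        then show "\<not> cvx (set (drop j s))" unfolding eq .
      qed
    next
      assume H: "\<forall>j. 1 \<le> j \<and> j < k \<longrightarrow> \<not> cvx (set (drop j s))"
      show "\<forall>l. 2 \<le> l \<and> l < k + 1 \<longrightarrow> \<not> cvx (set (drop (k + 1 - l) s))"
      proof (intro allI impI)
        fix l assume l: "2 \<le> l \<and> l < k + 1"
        then have "1 \<le> k + 1 - l \<and> k + 1 - l < k" by auto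
        then show "\<not> cvx (set (drop (k + 1 - l) s))" using H by blast
      qed
    qed
    finally show ?thesis .
  qed
  show ?thesis using A B by blast
qed


lemma red_eq:
  assumes a1: "1 \<le> a" and an: "a + c \<le> n" and setu: "set u = {1..<a} \<union> {a + c<..n}"
  shows "red (u @ [a]) = map (gg a c) (u @ [a])"
  unfolding red_def
proof (rule map_cong[OF refl])
  fix x assume x: "x \<in> set (u @ [a])"
  have sw: "set (u @ [a]) = {1..a} \<union> {a + c<..n}" using setu a1 by auto
  show "card {y \<in> set (u @ [a]). y \<le> x} = gg a c x"
  proof (cases "x \<le> a")
    case True
    then have "{y \<in> set (u @ [a]). y \<le> x} = {1..x}" using sw by auto
    then show ?thesis using True by (simp add: gg_def)
  next
    case False
    then have xg: "x > a + c" "x \<le> n" using x sw by auto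
    then have "{y \<in> set (u @ [a]). y \<le> x} = {1..a} \<union> {a + c<..x}" using sw by auto
    moreover have "card ({1..a} \<union> {a + c<..x}) = a + (x - (a + c))"
      by (subst card_Un_disjoint) auto
    ultimately show ?thesis using xg by (simp add: gg_def)
  qed
qed

lemma transfer_cvx:
  assumes a1: "1 \<le> a" and an: "a + c \<le> n" and setu: "set u = {1..<a} \<union> {a + c<..n}"
    and dist: "distinct u" and j: "j \<le> length u"
  shows "cvx ({1..n} - set (take j u)) \<longleftrightarrow> cvx (set (drop j (map (gg a c) (u @ [a]))))"
proof -
  have un: "set u = set (take j u) \<union> set (drop j u)" by (metis append_take_drop_id set_append)
  have dj: "set (take j u) \<inter> set (drop j u) = {}"
    using dist by (metis append_take_drop_id distinct_append)
  have T: "{1..n} - set (take j u) = set (drop j u) \<union> {a..a + c}"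
  proof -
    have "{1..n} = set u \<union> {a..a + c}" using setu a1 an by auto
    moreover have "set u \<inter> {a..a + c} = {}" using setu by auto
    ultimately show ?thesis using un dj by auto
  qed
  have gab: "gg a c ` {a..a + c} = {a}"
  proof
    show "gg a c ` {a..a + c} \<subseteq> {a}" by (auto simp: gg_def)
    show "{a} \<subseteq> gg a c ` {a..a + c}" by (auto simp: gg_def intro!: image_eqI[of a])
  qed
  have ga: "gg a c a = a" by (simp add: gg_def)
  have D: "set (drop j (map (gg a c) (u @ [a]))) = gg a c ` set (drop j u) \<union> {a}"
    using j ga by (simp add: drop_map)
  have "gg a c ` ({1..n} - set (take j u)) = set (drop j (map (gg a c) (u @ [a])))"
    unfolding T D image_Un gab ..
  moreover have "{a..a + c} \<subseteq> {1..n} - set (take j u)" unfolding T by auto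
  ultimately show ?thesis using cvx_gg by metis
qed

lemma gg_inj:
  assumes "a + c \<le> n"
  shows "inj_on (gg a c) ({1..a} \<union> {a + c<..n})"
  unfolding inj_on_def gg_def by auto

lemma gg_image:
  assumes a1: "1 \<le> a" and an: "a + c \<le> n"
  shows "gg a c ` ({1..a} \<union> {a + c<..n}) = {1..n - c}"
proof
  show "gg a c ` ({1..a} \<union> {a + c<..n}) \<subseteq> {1..n - c}" using a1 an by (auto simp: gg_def)
  show "{1..n - c} \<subseteq> gg a c ` ({1..a} \<union> {a + c<..n})"
  proof
    fix y assume y: "y \<in> {1..n - c}"
    show "y \<in> gg a c ` ({1..a} \<union> {a + c<..n})"
    proof (cases "y \<le> a")
      case True
      then show ?thesis using y by (auto simp: gg_def intro!: image_eqI[of y])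
    next
      case False
      then have "gg a c (y + c) = y" by (simp add: gg_def)
      moreover have "y + c \<in> {a + c<..n}" using False y an by auto
      ultimately show ?thesis by (metis UnI2 image_eqI)
    qed
  qed
qed


definition gi :: "nat \<Rightarrow> nat \<Rightarrow> nat \<Rightarrow> nat" where
  "gi a c y = (if y \<le> a then y else y + c)"

lemma gg_gi: "gg a c (gi a c y) = y"
  unfolding gg_def gi_def by auto

lemma gi_inj: "inj (gi a c)"
  unfolding inj_def gi_def by auto

lemma gi_gg: "x \<le> a \<or> x > a + c \<Longrightarrow> gi a c (gg a c x) = x"
  unfolding gg_def gi_def by auto

lemma forward:
  assumes n3: "n \<ge> 3" and k1: "1 \<le> k" and kn: "k < n div 2"
    and a1: "1 \<le> a" and ak: "a \<le> k + 1" and len: "length u = k" and dist: "distinct u"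
    and setu: "set u = {1..<a} \<union> {a + (n - k - 1)<..n}" and pd: "PD k n u"
  shows "map (gg a (n - k - 1)) (u @ [a]) \<in> Bset (k + 1)"
proof -
  define c where "c = n - k - 1"
  have kk: "2 * k + 2 \<le> n" using kn by linarith
  have an: "a + c \<le> n" using ak kk c_def by simp
  have nc: "n - c = k + 1" using kk c_def by simp
  have sw: "set (u @ [a]) = {1..a} \<union> {a + c<..n}" using setu a1 c_def by auto
  have au: "a \<notin> set u" using setu c_def by auto
  have "distinct (u @ [a])" using dist au by simp
  moreover have "inj_on (gg a c) (set (u @ [a]))" unfolding sw by (rule gg_inj[OF an])
  ultimately have d: "distinct (map (gg a c) (u @ [a]))" unfolding distinct_map by blast
  have s0: "set (map (gg a c) (u @ [a])) = gg a c ` set (u @ [a])" by (rule set_map)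
  have s: "set (map (gg a c) (u @ [a])) = {1..k + 1}"
    unfolding s0 sw gg_image[OF a1 an] nc ..
  have pb: "PB k (map (gg a c) (u @ [a]))" unfolding PB_def
  proof (intro allI impI)
    fix j assume j: "1 \<le> j \<and> j < k"
    then show "\<not> cvx (set (drop j (map (gg a c) (u @ [a]))))"
      using pd transfer_cvx[OF a1 an setu[folded c_def] dist, of j] len unfolding PD_def by auto
  qed
  show ?thesis using B_char[OF k1] len d s pb c_def by simp
qed

lemma backward:
  assumes n3: "n \<ge> 3" and k1: "1 \<le> k" and kn: "k < n div 2"
    and s: "s \<in> Bset (k + 1)"
  shows "map (gi (last s) (n - k - 1)) (butlast s) \<in> Dset k n"
    and "red (map (gi (last s) (n - k - 1)) (butlast s)
           @ [amin n (map (gi (last s) (n - k - 1)) (butlast s))]) = s"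
proof -
  define c where "c = n - k - 1"
  define a where "a = last s"
  define u where "u = map (gi a c) (butlast s)"
  have kk: "2 * k + 2 \<le> n" using kn by linarith
  have len: "length s = k + 1" and dist: "distinct s" and ss: "set s = {1..k + 1}" and pb: "PB k s"
    using B_char[OF k1] s by auto
  have sne: "s \<noteq> []" using len by auto
  have sdec: "s = butlast s @ [a]" using sne a_def by simp
  have aS: "a \<in> {1..k + 1}" using ss sne a_def by (metis last_in_set)
  then have a1: "1 \<le> a" and ak: "a \<le> k + 1" by auto
  have an: "a + c \<le> n" using ak kk c_def by simp
  have sb: "set (butlast s) = {1..k + 1} - {a}"
  proof -
    have "set s = set (butlast s) \<union> {a}" by (subst sdec) simp
    moreover have "a \<notin> set (butlast s)" using dist sdec by (metis distinct_append disjoint_iff list.set_intros(1))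
    ultimately show ?thesis using ss by auto
  qed
  have setu: "set u = {1..<a} \<union> {a + c<..n}"
  proof -
    have "set u = gi a c ` ({1..k + 1} - {a})" unfolding u_def using sb by simp
    also have "\<dots> = {1..<a} \<union> {a + c<..n}"
    proof
      show "gi a c ` ({1..k + 1} - {a}) \<subseteq> {1..<a} \<union> {a + c<..n}"
        using c_def kk ak by (auto simp: gi_def)
      show "{1..<a} \<union> {a + c<..n} \<subseteq> gi a c ` ({1..k + 1} - {a})"
      proof
        fix x assume x: "x \<in> {1..<a} \<union> {a + c<..n}"
        have "gi a c (gg a c x) = x" using x by (intro gi_gg) auto
        moreover have "gg a c x \<in> {1..k + 1} - {a}" using x c_def kk ak by (auto simp: gg_def)
        ultimately show "x \<in> gi a c ` ({1..k + 1} - {a})" by (metis image_eqI)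
      qed
    qed
    finally show ?thesis .
  qed
  have lenu: "length u = k" unfolding u_def using len by simp
  have distu: "distinct u" unfolding u_def using dist gi_inj
    by (simp add: distinct_map inj_on_def inj_def distinct_butlast)
  have mapu: "map (gg a c) (u @ [a]) = s"
  proof -
    have "map (gg a c) u = butlast s" unfolding u_def by (simp add: gg_gi comp_def)
    moreover have "gg a c a = a" by (simp add: gg_def)
    ultimately have "map (gg a c) (u @ [a]) = butlast s @ [a]" by simp
    then show ?thesis using sdec by metis
  qed
  have pd: "PD k n u" unfolding PD_def
  proof (intro allI impI)
    fix j assume j: "1 \<le> j \<and> j < k"
    then show "\<not> cvx ({1..n} - set (take j u))"
      using pb transfer_cvx[OF a1 an setu distu, of j] lenu mapu unfolding PB_def by auto
  qed
  show "map (gi (last s) (n - k - 1)) (butlast s) \<in> Dset k n"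
    using D_char[OF n3 k1 kn] a1 ak lenu distu setu pd unfolding u_def c_def a_def by blast
  have am: "amin n u = a" using amin_eq[OF a1 an setu] .
  show "red (map (gi (last s) (n - k - 1)) (butlast s)
           @ [amin n (map (gi (last s) (n - k - 1)) (butlast s))]) = s"
    using red_eq[OF a1 an setu] am mapu unfolding u_def c_def a_def by simp
qed


theorem mainTheorem11:
  fixes n k :: nat
  assumes "n \<ge> 3" and "1 \<le> k" and "k < n div 2"
  shows "(\<exists>f. bij_betw f (Dset k n) (Aset (k + 1)))
       \<and> card (Dset k n) = card (Aset (k + 1))
       \<and> bij_betw (\<lambda>u. red (u @ [amin n u])) (Dset k n) (Bset (k + 1))"
proof -
  note n3 = assms(1) and k1 = assms(2) and kn = assms(3)
  define c where "c = n - k - 1"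
  define F where "F = (\<lambda>u. red (u @ [amin n u]))"
  define G where "G = (\<lambda>s. map (gi (last s) c) (butlast s))"
  have kk: "2 * k + 2 \<le> n" using kn by linarith
  have Fu: "F u = map (gg a c) (u @ [a]) \<and> F u \<in> Bset (k + 1) \<and> G (F u) = u"
    if u: "u \<in> Dset k n" and a1: "1 \<le> a" and ak: "a \<le> k + 1" and len: "length u = k"
      and dist: "distinct u" and setu: "set u = {1..<a} \<union> {a + c<..n}" and pd: "PD k n u" for u a
  proof -
    have an: "a + c \<le> n" using ak kk c_def by simp
    have eq: "F u = map (gg a c) (u @ [a])"
      unfolding F_def amin_eq[OF a1 an setu] using red_eq[OF a1 an setu] .
    have inB: "F u \<in> Bset (k + 1)"
      using eq forward[OF n3 k1 kn a1 ak len dist setu[unfolded c_def] pd] c_def by simp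
    have "G (F u) = map (gi a c) (map (gg a c) u)"
      unfolding G_def eq by (simp add: gg_def)
    also have "\<dots> = u"
    proof -
      have "\<forall>x\<in>set u. gi a c (gg a c x) = x" using setu by (auto intro!: gi_gg)
      then show ?thesis by (simp add: map_idI)
    qed
    finally show ?thesis using eq inB by simp
  qed
  have bij: "bij_betw F (Dset k n) (Bset (k + 1))"
  proof (rule bij_betw_byWitness[where f' = G])
    show "\<forall>u\<in>Dset k n. G (F u) = u"
      using Fu D_char[OF n3 k1 kn] c_def by metis
    show "\<forall>s\<in>Bset (k + 1). F (G s) = s"
      using backward[OF n3 k1 kn] unfolding F_def G_def c_def by blast
    show "F ` Dset k n \<subseteq> Bset (k + 1)"
      using Fu D_char[OF n3 k1 kn] c_def by blast
    show "G ` Bset (k + 1) \<subseteq> Dset k n"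
      using backward[OF n3 k1 kn] unfolding G_def c_def by blast
  qed
  have brev: "bij_betw rev (Bset (k + 1)) (Aset (k + 1))"
    unfolding Bset_def by (rule bij_betw_imageI) (auto simp: inj_on_def image_image)
  have "bij_betw (rev \<circ> F) (Dset k n) (Aset (k + 1))" using bij_betw_trans[OF bij brev] .
  then have e: "\<exists>f. bij_betw f (Dset k n) (Aset (k + 1))" by blast
  show ?thesis using e bij bij_betw_same_card[OF bij] bij_betw_same_card[OF brev]
    unfolding F_def by simp
qed

end
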